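(* Let $g:M^{3\times3}\times M^{3\times3}\times[0,\infty)\to(-\infty,\infty]$ be convex, real-valued on $M^{3\times3}\times M^{3\times3}\times(0,\infty)$, and satisfy $g(RA,RH,\delta)=g(A,H,\delta)$ for all $R\in SO(3)$, $A,H\in M^{3\times3}$, $\delta\ge0$. Suppose $\psi(A):=g(A,\operatorname{cof}A,\det A)$, $A\in M^{3\times3}_+$, satisfies $\psi(A_j)\to\infty$ for every sequence $A_j\in M^{3\times3}_+$ with $\det A_j\to0+$. Then the set $\{(A,H)\in M^{3\times3}\times M^{3\times3}: g(A,H,0)<\infty\}$ has empty interior.
   Context: $M^{3\times3}$ is the space of real $3\times3$ matrices, $M^{3\times3}_+=\{A:\det A>0\}$, $\operatorname{cof}A$ is the cofactor matrix of $A$, $SO(3)$ is the rotation group. *)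

theory Defs
  imports "HOL-Analysis.Analysis"
begin

text \<open>Cofactor matrix: entry (i,j) is the determinant of A with row i and column j
  replaced by the unit vectors, i.e. (-1)^(i+j) times the (i,j) minor.\<close>
definition cof :: "real^'n^'n \<Rightarrow> real^'n^'n" where
  "cof A = (\<chi> i j. det (\<chi> k l. if k = i \<and> l = j then 1
                                 else if k = i \<or> l = j then 0 else A $ k $ l))"

definition convex_ereal_on :: "'a::real_vector set \<Rightarrow> ('a \<Rightarrow> ereal) \<Rightarrow> bool" where
  "convex_ereal_on S f \<longleftrightarrow> convex S \<and> (\<forall>x\<in>S. f x \<noteq> -\<infinity>) \<and>
     (\<forall>x\<in>S. \<forall>y\<in>S. \<forall>t::real. 0 < t \<and> t < 1 \<longrightarrow>
        f ((1 - t) *\<^sub>R x + t *\<^sub>R y) \<le> ereal (1 - t) * f x + ereal t * f y)"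

end

theory Submission
  imports Defs
begin
definition diag3 :: "real \<Rightarrow> real \<Rightarrow> real \<Rightarrow> real^3^3" where
 "diag3 a b c = (\<chi> i j. if i = j then (if i = 1 then a else if i = 2 then b else c) else 0)"

lemma diag3_mult: "diag3 a b c ** diag3 a' b' c' = diag3 (a * a') (b * b') (c * c')"
  unfolding diag3_def by (simp add: vec_eq_iff matrix_matrix_mult_def forall_3 sum_3)

lemma diag3_add: "diag3 a b c + diag3 a' b' c' = diag3 (a+a') (b+b') (c+c')"
  unfolding diag3_def by (simp add: vec_eq_iff forall_3)
lemma diag3_scale: "r *\<^sub>R diag3 a b c = diag3 (r * a) (r * b) (r * c)"
  unfolding diag3_def by (simp add: vec_eq_iff forall_3)
lemma diag3_one: "mat 1 = diag3 1 1 1"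
  unfolding diag3_def by (simp add: vec_eq_iff forall_3 mat_def)
lemma diag3_zero: "0 = diag3 0 0 0"
  unfolding diag3_def by (simp add: vec_eq_iff forall_3)
lemma diag3_transpose: "transpose (diag3 a b c) = diag3 a b c"
  unfolding diag3_def by (simp add: vec_eq_iff forall_3 transpose_def)
lemma det_diag3: "det (diag3 a b c) = a * b*c"
  unfolding diag3_def by (simp add: det_3)
lemma cof_diag3: "cof (diag3 a b c) = diag3 (b * c) (a * c) (a * b)"
  unfolding diag3_def cof_def by (simp add: vec_eq_iff forall_3 det_3)
lemma rot: "rotation_matrix (diag3 a b c)" if "a * a=1" "b * b=1" "c * c=1" "a * b*c=1"
  unfolding rotation_matrix_def orthogonal_matrix diag3_transpose diag3_mult det_diag3 diag3_one
  using that by simp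

lemma diag3_tendsto:
  fixes a b c :: "real \<Rightarrow> real"
  assumes "(a \<longlongrightarrow> 0) F" "(b \<longlongrightarrow> 0) F" "(c \<longlongrightarrow> 0) F"
  shows "((\<lambda>s. diag3 (a s) (b s) (c s)) \<longlongrightarrow> 0) F"
proof -
  have e: "diag3 x y z = x *\<^sub>R diag3 1 0 0 + y *\<^sub>R diag3 0 1 0 + z *\<^sub>R diag3 0 0 1" for x y z
    by (simp add: diag3_scale diag3_add)
  have "((\<lambda>s. a s *\<^sub>R diag3 1 0 0 + b s *\<^sub>R diag3 0 1 0 + c s *\<^sub>R diag3 0 0 1) \<longlongrightarrow>
        0 *\<^sub>R diag3 1 0 0 + 0 *\<^sub>R diag3 0 1 0 + 0 *\<^sub>R diag3 0 0 1) F"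
    by (intro tendsto_intros assms)
  then show ?thesis unfolding e[symmetric] by (simp add: diag3_zero[symmetric])
qed

lemma near:
  fixes A0 H0 :: "real^3^3"
  shows "((\<lambda>s. (A0 + diag3 a b c ** diag3 s s 0, H0 + diag3 a b c ** diag3 0 0 (s * s)))
     \<longlongrightarrow> (A0, H0)) (at_right 0)"
proof -
  have "((\<lambda>s::real. diag3 (a * s) (b * s) (c * 0)) \<longlongrightarrow> 0) (at_right 0)"
    by (rule diag3_tendsto) (auto intro!: tendsto_eq_intros)
  moreover have "((\<lambda>s::real. diag3 (a * 0) (b * 0) (c * (s * s))) \<longlongrightarrow> 0) (at_right 0)"
    by (rule diag3_tendsto) (auto intro!: tendsto_eq_intros)
  ultimately have "((\<lambda>s. (A0 + diag3 (a * s) (b * s) (c * 0), H0 + diag3 (a * 0) (b * 0) (c * (s * s))))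
     \<longlongrightarrow> (A0 + 0, H0 + 0)) (at_right 0)"
    by (intro tendsto_intros)
  then show ?thesis by (simp add: diag3_mult)
qed

lemma rotback:
  assumes "a * a = 1" "b * b=1" "c * c=1"
  shows "diag3 a b c ** (A0 + diag3 a b c ** D) = diag3 a b c ** A0 + D"
  by (simp add: matrix_add_ldistrib matrix_mul_assoc diag3_mult assms diag3_one[symmetric] matrix_mul_lid)

lemma avg4:
  fixes A D :: "real^3^3"
  shows "(1/2) *\<^sub>R ((1/2) *\<^sub>R (diag3 1 1 1 ** A + D) + (1/2) *\<^sub>R (diag3 1 (-1) (-1) ** A + D))
       + (1/2) *\<^sub>R ((1/2) *\<^sub>R (diag3 (-1) 1 (-1) ** A + D) + (1/2) *\<^sub>R (diag3 (-1) (-1) 1 ** A + D)) = D"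
  by (simp add: vec_eq_iff forall_3 diag3_def matrix_matrix_mult_def sum_3 algebra_simps)

theorem mainTheorem17:
  fixes g :: "(real^3^3) \<times> (real^3^3) \<times> real \<Rightarrow> ereal"
  assumes conv: "convex_ereal_on (UNIV \<times> UNIV \<times> {0..}) g"
    and finite_pos: "\<And>A H \<delta>. \<delta> > 0 \<Longrightarrow> \<bar>g (A, H, \<delta>)\<bar> \<noteq> \<infinity>"
    and frame: "\<And>R A H \<delta>. rotation_matrix R \<Longrightarrow> \<delta> \<ge> 0 \<Longrightarrow>
                  g (R ** A, R ** H, \<delta>) = g (A, H, \<delta>)"
    and coercive: "\<And>Aj :: nat \<Rightarrow> real^3^3. (\<forall>j. det (Aj j) > 0) \<Longrightarrow>
                  (\<lambda>j. det (Aj j)) \<longlonglongrightarrow> 0 \<Longrightarrow>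
                  ((\<lambda>j. g (Aj j, cof (Aj j), det (Aj j))) \<longlongrightarrow> \<infinity>) sequentially"
  shows "interior {(A, H). g (A, H, 0) < \<infinity>} = {}"
proof (rule ccontr)
  let ?U = "{(A, H). g (A, H, 0) < \<infinity>}"
  assume "interior ?U \<noteq> {}"
  then obtain A0 H0 where Z: "(A0, H0) \<in> interior ?U" by auto
  then obtain S where S: "open S" "(A0,H0) \<in> S" "S \<subseteq> ?U" by (meson interiorE)
  have ev: "eventually (\<lambda>s. g (A0 + diag3 a b c ** diag3 s s 0, H0 + diag3 a b c ** diag3 0 0 (s * s), 0) < \<infinity>) (at_right 0)"
    for a b c
    using topological_tendstoD[OF near[of A0 a b c H0] S(1) S(2)] S(3)
    by (auto elim!: eventually_mono)
  have conv2: "\<And>x y. x \<in> UNIV \<times> UNIV \<times> {0..} \<Longrightarrow> y \<in> UNIV \<times> UNIV \<times> {0..} \<Longrightarrow>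
        g ((1 - t) *\<^sub>R x + t *\<^sub>R y) \<le> ereal (1 - t) * g x + ereal t * g y" if "0<t" "t<1" for t
    using conv that unfolding convex_ereal_on_def by blast
  have notm: "g x \<noteq> -\<infinity>" if "x \<in> UNIV \<times> UNIV \<times> {0..}" for x
    using conv that unfolding convex_ereal_on_def by blast
  have mid: "g ((1/2) *\<^sub>R x + (1/2) *\<^sub>R y) < \<infinity>"
    if hx: "x \<in> UNIV \<times> UNIV \<times> {0..}" and hy: "y \<in> UNIV \<times> UNIV \<times> {0..}" and fx: "g x < \<infinity>" and fy: "g y < \<infinity>" for x y
  proof -
    have "g ((1 - 1/2) *\<^sub>R x + (1/2) *\<^sub>R y) \<le> ereal (1 - 1/2) * g x + ereal (1/2) * g y"
      using conv2[of "1/2" x y] that by simp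
    moreover obtain u where "g x = ereal u"
      using fx notm[OF hx] by (cases "g x") auto
    moreover obtain v where "g y = ereal v"
      using fy notm[OF hy] by (cases "g y") auto
    ultimately have "g ((1/2) *\<^sub>R x + (1/2) *\<^sub>R y) \<le> ereal (u/2 + v/2)" by (simp add: algebra_simps)
    moreover have "ereal (u/2 + v/2) < \<infinity>" by simp
    ultimately show ?thesis by (rule le_less_trans)
  qed
  have evall: "eventually (\<lambda>s.
      g (A0 + diag3 1 1 1 ** diag3 s s 0, H0 + diag3 1 1 1 ** diag3 0 0 (s * s), 0) < \<infinity> \<and>
      g (A0 + diag3 1 (-1) (-1) ** diag3 s s 0, H0 + diag3 1 (-1) (-1) ** diag3 0 0 (s * s), 0) < \<infinity> \<and>
      g (A0 + diag3 (-1) 1 (-1) ** diag3 s s 0, H0 + diag3 (-1) 1 (-1) ** diag3 0 0 (s * s), 0) < \<infinity> \<and>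
      g (A0 + diag3 (-1) (-1) 1 ** diag3 s s 0, H0 + diag3 (-1) (-1) 1 ** diag3 0 0 (s * s), 0) < \<infinity>) (at_right 0)"
    by (intro eventually_conj ev)
  then obtain b :: real where b: "b > 0" "\<And>y. y > 0 \<Longrightarrow> y < b \<Longrightarrow>
      g (A0 + diag3 1 1 1 ** diag3 y y 0, H0 + diag3 1 1 1 ** diag3 0 0 (y * y), 0) < \<infinity> \<and>
      g (A0 + diag3 1 (-1) (-1) ** diag3 y y 0, H0 + diag3 1 (-1) (-1) ** diag3 0 0 (y * y), 0) < \<infinity> \<and>
      g (A0 + diag3 (-1) 1 (-1) ** diag3 y y 0, H0 + diag3 (-1) 1 (-1) ** diag3 0 0 (y * y), 0) < \<infinity> \<and>
      g (A0 + diag3 (-1) (-1) 1 ** diag3 y y 0, H0 + diag3 (-1) (-1) 1 ** diag3 0 0 (y * y), 0) < \<infinity>"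
    unfolding eventually_at_right_field by auto
  define s where "s = b / 2"
  have s: "s > 0" "s < b" using b(1) unfolding s_def by auto
  define D where "D = diag3 s s 0"
  define E where "E = diag3 0 0 (s * s)"
  have Y: "g (diag3 a1 a2 a3 ** A0 + D, diag3 a1 a2 a3 ** H0 + E, 0) < \<infinity>"
    if "g (A0 + diag3 a1 a2 a3 ** D, H0 + diag3 a1 a2 a3 ** E, 0) < \<infinity>"
       "a1 * a1 = 1" "a2 * a2 = 1" "a3 * a3 = 1" "a1 * a2 * a3 = 1" for a1 a2 a3
  proof -
    have "g (diag3 a1 a2 a3 ** (A0 + diag3 a1 a2 a3 ** D), diag3 a1 a2 a3 ** (H0 + diag3 a1 a2 a3 ** E), 0)
        = g (A0 + diag3 a1 a2 a3 ** D, H0 + diag3 a1 a2 a3 ** E, 0)"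
      by (rule frame) (use rot[OF that(2-5)] in auto)
    then show ?thesis using that(1) by (simp add: rotback[OF that(2-4)])
  qed
  note bb = b(2)[OF s, folded D_def E_def]
  have Y0: "g (diag3 1 1 1 ** A0 + D, diag3 1 1 1 ** H0 + E, 0) < \<infinity>"
    by (rule Y) (use bb in auto)
  have Y1: "g (diag3 1 (-1) (-1) ** A0 + D, diag3 1 (-1) (-1) ** H0 + E, 0) < \<infinity>"
    by (rule Y) (use bb in auto)
  have Y2: "g (diag3 (-1) 1 (-1) ** A0 + D, diag3 (-1) 1 (-1) ** H0 + E, 0) < \<infinity>"
    by (rule Y) (use bb in auto)
  have Y3: "g (diag3 (-1) (-1) 1 ** A0 + D, diag3 (-1) (-1) 1 ** H0 + E, 0) < \<infinity>"
    by (rule Y) (use bb in auto)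
  have M1: "g ((1/2) *\<^sub>R (diag3 1 1 1 ** A0 + D, diag3 1 1 1 ** H0 + E, 0::real)
     + (1/2) *\<^sub>R (diag3 1 (-1) (-1) ** A0 + D, diag3 1 (-1) (-1) ** H0 + E, 0::real)) < \<infinity>"
    by (rule mid) (use Y0 Y1 in auto)
  have M2: "g ((1/2) *\<^sub>R (diag3 (-1) 1 (-1) ** A0 + D, diag3 (-1) 1 (-1) ** H0 + E, 0::real)
     + (1/2) *\<^sub>R (diag3 (-1) (-1) 1 ** A0 + D, diag3 (-1) (-1) 1 ** H0 + E, 0::real)) < \<infinity>"
    by (rule mid) (use Y2 Y3 in auto)
  have M: "g ((1/2) *\<^sub>R ((1/2) *\<^sub>R (diag3 1 1 1 ** A0 + D, diag3 1 1 1 ** H0 + E, 0::real)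
     + (1/2) *\<^sub>R (diag3 1 (-1) (-1) ** A0 + D, diag3 1 (-1) (-1) ** H0 + E, 0::real))
     + (1/2) *\<^sub>R ((1/2) *\<^sub>R (diag3 (-1) 1 (-1) ** A0 + D, diag3 (-1) 1 (-1) ** H0 + E, 0::real)
     + (1/2) *\<^sub>R (diag3 (-1) (-1) 1 ** A0 + D, diag3 (-1) (-1) 1 ** H0 + E, 0::real))) < \<infinity>"
    by (rule mid) (use M1 M2 in auto)
  have P: "g (D, E, 0) < \<infinity>"
    using M avg4[of A0 D] avg4[of H0 E] by simp
  obtain c0 where c0: "g (D, E, 0) = ereal c0"
    using P notm[of "(D, E, 0)"] by (cases "g (D, E, 0)") auto
  have ss: "s * s > 0" using s by simp
  obtain c1 where c1: "g (diag3 s s 1, diag3 s s (s * s), s * s) = ereal c1"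
    using finite_pos[OF ss, of "diag3 s s 1" "diag3 s s (s * s)"]
    by (cases "g (diag3 s s 1, diag3 s s (s * s), s * s)") auto
  define t where "t j = inverse (real (Suc j)) / 2" for j
  define Aj where "Aj j = diag3 s s (t j)" for j
  have tpos: "0 < t j" "t j < 1" for j
  proof -
    have "inverse (real (Suc j)) \<le> 1" by (simp add: inverse_le_1_iff)
    then show "0 < t j" "t j < 1" unfolding t_def by auto
  qed
  have det: "det (Aj j) = s * s * t j" for j unfolding Aj_def det_diag3 by simp
  have key: "(Aj j, cof (Aj j), det (Aj j)) = (1 - t j) *\<^sub>R (D, E, 0::real)
      + t j *\<^sub>R (diag3 s s 1, diag3 s s (s * s), s * s)" for j
    unfolding Aj_def D_def E_def
    by (simp add: cof_diag3 det_diag3 diag3_scale diag3_add algebra_simps)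
  have lin: "(1 - t j) * c0 + t j * c1 \<le> \<bar>c0\<bar> + \<bar>c1\<bar>" for j
  proof -
    have "(1 - t j) * c0 \<le> (1 - t j) * \<bar>c0\<bar>" using tpos[of j] by (intro mult_left_mono) auto
    also have "\<dots> \<le> 1 * \<bar>c0\<bar>" using tpos[of j] by (intro mult_right_mono) auto
    finally have 1: "(1 - t j) * c0 \<le> \<bar>c0\<bar>" by simp
    have "t j * c1 \<le> t j * \<bar>c1\<bar>" using tpos[of j] by (intro mult_left_mono) auto
    also have "\<dots> \<le> 1 * \<bar>c1\<bar>" using tpos[of j] by (intro mult_right_mono) auto
    finally have 2: "t j * c1 \<le> \<bar>c1\<bar>" by simp
    show ?thesis using 1 2 by simp
  qed
  have bound: "g (Aj j, cof (Aj j), det (Aj j)) \<le> ereal (\<bar>c0\<bar> + \<bar>c1\<bar>)" for j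
  proof -
    have "g (Aj j, cof (Aj j), det (Aj j)) \<le> ereal (1 - t j) * g (D, E, 0) +
        ereal (t j) * g (diag3 s s 1, diag3 s s (s * s), s * s)"
      unfolding key using tpos[of j] ss by (intro conv2) auto
    also have "\<dots> = ereal ((1 - t j) * c0 + t j * c1)" using c0 c1 by simp
    also have "\<dots> \<le> ereal (\<bar>c0\<bar> + \<bar>c1\<bar>)" using lin[of j] by simp
    finally show ?thesis .
  qed
  have "\<forall>j. det (Aj j) > 0" using det tpos ss by simp
  moreover have "(\<lambda>j. det (Aj j)) \<longlonglongrightarrow> 0"
  proof -
    have "t \<longlonglongrightarrow> 0 / 2" unfolding t_def
      by (intro tendsto_divide LIMSEQ_inverse_real_of_nat tendsto_const) auto
    then have "(\<lambda>j. s * s * t j) \<longlonglongrightarrow> s * s * 0" by (intro tendsto_mult tendsto_const) auto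
    then show ?thesis using det by simp
  qed
  ultimately have "((\<lambda>j. g (Aj j, cof (Aj j), det (Aj j))) \<longlongrightarrow> \<infinity>) sequentially"
    by (rule coercive)
  then have "eventually (\<lambda>j. ereal (\<bar>c0\<bar> + \<bar>c1\<bar>) < g (Aj j, cof (Aj j), det (Aj j))) sequentially"
    unfolding tendsto_PInfty by blast
  then obtain j where "ereal (\<bar>c0\<bar> + \<bar>c1\<bar>) < g (Aj j, cof (Aj j), det (Aj j))"
    using eventually_sequentially by auto
  with bound[of j] show False by simp
qed
end
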